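(* For $0<x<1$, as power series in $t$ (convergent near $t=0$), \[ \frac{1}{x^{1/2}(1-x)^{1/2}}\left(\arcsin\!\big(x^{1/2}e^{(1-x)t}\big) - \arcsin\!\big(x^{1/2}\big)\right) = \sum_{n=0}^\infty 2^nF_n(x,1/2)\frac{t^{n+1}}{(n+1)!}. \]
   Context: For a permutation $\pi=\pi_1\cdots\pi_n$ of $[n]=\{1,\dots,n\}$, let $\mathrm{exc}(\pi)=|\{i\in[n]:\pi_i>i\}|$ and $\mathrm{cyc}(\pi)$ the number of cycles in its disjoint cycle decomposition. The bivariate Eulerian polynomials are $F_0(x,y)=1$ and $F_n(x,y)=\sum_{\pi\in\mathfrak S_n} x^{\mathrm{exc}(\pi)}y^{\mathrm{cyc}(\pi)}$ for $n>0$, where $\mathfrak S_n$ is the symmetric group on $[n]$; their exponential generating function is $\sum_{n\ge0}F_n(x,y)t^n/n! = \left(\frac{1-x}{e^{t(x-1)}-x}\right)^y$. *)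

theory Defs
  imports "HOL-Analysis.Analysis" "HOL-Combinatorics.Permutations"
begin

definition exc :: "nat \<Rightarrow> (nat \<Rightarrow> nat) \<Rightarrow> nat" where
  "exc n p = card {i \<in> {1..n}. p i > i}"

definition cycle_of :: "nat \<Rightarrow> (nat \<Rightarrow> nat) \<Rightarrow> nat \<Rightarrow> nat set" where
  "cycle_of n p i = {j \<in> {1..n}. \<exists>k. (p ^^ k) i = j}"

definition cyc :: "nat \<Rightarrow> (nat \<Rightarrow> nat) \<Rightarrow> nat" where
  "cyc n p = card (cycle_of n p ` {1..n})"

text \<open>Bivariate Eulerian polynomial F_n(x,y); F_0 = 1 (only the identity permutes the empty set).\<close>
definition bivEuler :: "nat \<Rightarrow> real \<Rightarrow> real \<Rightarrow> real" where
  "bivEuler n x y = (\<Sum>p\<in>{p. p permutes {1..n}}. x ^ exc n p * y ^ cyc n p)"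

end

theory Submission
  imports Defs "HOL-Computational_Algebra.Polynomial" "HOL-Complex_Analysis.Complex_Analysis"
begin

definition PS :: "nat \<Rightarrow> (nat \<Rightarrow> nat) set" where "PS n = {p. p permutes {1..n}}"

definition ins :: "nat \<Rightarrow> (nat \<Rightarrow> nat) \<Rightarrow> nat \<Rightarrow> (nat \<Rightarrow> nat)" where
  "ins n p i = (if i = 0 then p else p(i := Suc n, Suc n := p i))"

definition del :: "nat \<Rightarrow> (nat \<Rightarrow> nat) \<Rightarrow> (nat \<Rightarrow> nat)" where
  "del n s = Transposition.transpose (s (Suc n)) (Suc n) \<circ> s"

definition pos :: "nat \<Rightarrow> (nat \<Rightarrow> nat) \<Rightarrow> nat" where
  "pos n s = (if s (Suc n) = Suc n then 0 else inv s (Suc n))"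

lemma perm_fix: "p permutes {1..n} \<Longrightarrow> p (Suc n) = Suc n"
  by (simp add: permutes_not_in)

lemma perm_in: "p permutes {1..n} \<Longrightarrow> j \<in> {1..n} \<Longrightarrow> p j \<in> {1..n}"
  by (rule permutes_in_image[THEN iffD2])

lemma ins_eq:
  assumes p: "p permutes {1..n}" and i: "i \<in> {1..n}"
  shows "ins n p i = Transposition.transpose (p i) (Suc n) \<circ> p"
proof (rule ext)
  fix j
  have pi: "p i \<in> {1..n}" using perm_in[OF p i] .
  show "ins n p i j = (Transposition.transpose (p i) (Suc n) \<circ> p) j"
  proof (cases "j = i")
    case True then show ?thesis using i by (auto simp: ins_def transpose_def)
  next
    case False
    show ?thesis
    proof (cases "j = Suc n")
      case True then show ?thesis using i pi perm_fix[OF p] by (auto simp: ins_def transpose_def)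
    next
      case False2: False
      have "p j \<noteq> p i" using False permutes_inj[OF p] by (auto dest: injD)
      moreover have "p j \<noteq> Suc n"
      proof (cases "j \<in> {1..n}")
        case True then show ?thesis using perm_in[OF p True] by auto
      next
        case False then show ?thesis using permutes_not_in[OF p False] False2 by auto
      qed
      ultimately show ?thesis using False False2 i by (auto simp: ins_def transpose_def)
    qed
  qed
qed

lemma ins_permutes:
  assumes p: "p permutes {1..n}" and i: "i \<in> {0..n}"
  shows "ins n p i permutes {1..Suc n}"
proof (cases "i = 0")
  case True then show ?thesis using p by (auto simp: ins_def intro: permutes_subset)
next
  case False
  then have i1: "i \<in> {1..n}" using i by auto
  have "p permutes {1..Suc n}" using p by (auto intro: permutes_subset)
  moreover have "Transposition.transpose (p i) (Suc n) permutes {1..Suc n}"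
    using perm_in[OF p i1] by (intro permutes_swap_id) auto
  ultimately show ?thesis unfolding ins_eq[OF p i1] by (rule permutes_compose)
qed

lemma del_permutes:
  assumes s: "s permutes {1..Suc n}"
  shows "del n s permutes {1..n}"
proof -
  have c: "s (Suc n) \<in> {1..Suc n}" using perm_in[OF s, of "Suc n"] by simp
  have T: "Transposition.transpose (s (Suc n)) (Suc n) permutes {1..Suc n}"
    using permutes_swap_id[OF c, of "Suc n"] by simp
  have d: "del n s permutes {1..Suc n}" unfolding del_def using permutes_compose[OF s T] .
  have f: "del n s (Suc n) = Suc n" by (simp add: del_def transpose_def)
  show ?thesis
    by (rule permutes_superset[OF d]) (use f in \<open>auto simp: le_Suc_eq\<close>)
qed

lemma pos_range:
  assumes s: "s permutes {1..Suc n}"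
  shows "pos n s \<in> {0..n}"
proof (cases "s (Suc n) = Suc n")
  case True then show ?thesis by (simp add: pos_def)
next
  case False
  have "inv s (Suc n) \<in> {1..Suc n}" using perm_in[OF permutes_inv[OF s], of "Suc n"] by simp
  moreover have "inv s (Suc n) \<noteq> Suc n"
    using permutes_inverses(1)[OF s, of "Suc n"] False by auto
  ultimately show ?thesis using False by (auto simp: pos_def)
qed

lemma ins_Suc: "p permutes {1..n} \<Longrightarrow> i \<in> {1..n} \<Longrightarrow> ins n p i (Suc n) = p i"
  by (simp add: ins_def)
lemma ins_i: "i \<in> {1..n} \<Longrightarrow> ins n p i i = Suc n"
  by (simp add: ins_def)
lemma ins_other: "i \<in> {1..n} \<Longrightarrow> j \<noteq> i \<Longrightarrow> j \<noteq> Suc n \<Longrightarrow> ins n p i j = p j"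
  by (simp add: ins_def)

lemma del_ins:
  assumes p: "p permutes {1..n}" and i: "i \<in> {0..n}"
  shows "del n (ins n p i) = p \<and> pos n (ins n p i) = i"
proof (cases "i = 0")
  case True then show ?thesis using perm_fix[OF p] by (simp add: ins_def del_def pos_def)
next
  case False
  then have i1: "i \<in> {1..n}" using i by auto
  have pi: "p i \<in> {1..n}" using perm_in[OF p i1] .
  have s1: "ins n p i (Suc n) = p i" using ins_Suc[OF p i1] .
  have "del n (ins n p i) = p" unfolding del_def s1 ins_eq[OF p i1]
    by (simp add: comp_assoc[symmetric] perm_fix[OF p])
  moreover have "pos n (ins n p i) = i"
  proof -
    have "ins n p i permutes {1..Suc n}" using ins_permutes[OF p i] .
    then have "inv (ins n p i) (ins n p i i) = i" by (simp add: permutes_inverses)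
    then show ?thesis using s1 pi ins_i[OF i1] by (auto simp: pos_def)
  qed
  ultimately show ?thesis by simp
qed

lemma tt: "Transposition.transpose a b \<circ> Transposition.transpose a b \<circ> f = f"
  by (rule ext) (simp only: o_apply transpose_involutory)

lemma ins_del:
  assumes s: "s permutes {1..Suc n}"
  shows "ins n (del n s) (pos n s) = s"
proof (cases "s (Suc n) = Suc n")
  case True then show ?thesis by (simp add: ins_def del_def pos_def)
next
  case False
  have pr: "pos n s \<in> {0..n}" using pos_range[OF s] .
  have ps: "pos n s = inv s (Suc n)" using False by (simp add: pos_def)
  have ne: "pos n s \<noteq> 0"
  proof
    assume "pos n s = 0"
    then have "inv s (Suc n) = 0" using ps by simp
    moreover have "inv s (Suc n) \<in> {1..Suc n}" using perm_in[OF permutes_inv[OF s], of "Suc n"] by simp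
    ultimately show False by simp
  qed
  have i1: "pos n s \<in> {1..n}" using pr ne by auto
  have d: "del n s permutes {1..n}" using del_permutes[OF s] .
  have "s (pos n s) = Suc n" using ps permutes_inverses(1)[OF s] by simp
  have si: "s (pos n s) = Suc n" using \<open>s (pos n s) = Suc n\<close> .
  show ?thesis
  proof (rule ext)
    fix x
    show "ins n (del n s) (pos n s) x = s x"
    proof (cases "x = pos n s")
      case True then show ?thesis using i1 si by (simp add: ins_def)
    next
      case False
      show ?thesis
      proof (cases "x = Suc n")
        case True then show ?thesis using i1 si by (simp add: ins_def del_def)
      next
        case False2: False
        have "s x \<noteq> Suc n" using False si permutes_inj[OF s] by (metis injD)
        moreover have "s x \<noteq> s (Suc n)" using False2 permutes_inj[OF s] by (metis injD)
        ultimately show ?thesis using i1 False False2 by (simp add: ins_def del_def)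
      qed
    qed
  qed
qed

lemma finite_PS: "finite (PS n)"
  unfolding PS_def by (rule finite_permutations) simp

lemma sum_PS_Suc:
  "(\<Sum>s\<in>PS (Suc n). f s) = (\<Sum>p\<in>PS n. \<Sum>i\<in>{0..n}. f (ins n p i))"
proof -
  have "(\<Sum>p\<in>PS n. \<Sum>i\<in>{0..n}. f (ins n p i)) = (\<Sum>(p,i)\<in>PS n \<times> {0..n}. f (ins n p i))"
    by (rule sum.cartesian_product)
  also have "\<dots> = (\<Sum>s\<in>PS (Suc n). f s)"
  proof (rule sum.reindex_bij_witness[where i = "\<lambda>s. (del n s, pos n s)" and j = "\<lambda>(p,i). ins n p i"])
    fix a assume "a \<in> PS n \<times> {0..n}"
    then obtain p i where a: "a = (p,i)" "p permutes {1..n}" "i \<in> {0..n}" unfolding PS_def by blast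
    show "(del n (case a of (p, i) \<Rightarrow> ins n p i), pos n (case a of (p, i) \<Rightarrow> ins n p i)) = a"
      using del_ins[OF a(2,3)] a(1) by simp
    show "(case a of (p, i) \<Rightarrow> ins n p i) \<in> PS (Suc n)"
      using ins_permutes[OF a(2,3)] a(1) unfolding PS_def by simp
    show "f (case a of (p, i) \<Rightarrow> ins n p i) = (case a of (p, i) \<Rightarrow> f (ins n p i))"
      using a(1) by simp
  next
    fix b assume "b \<in> PS (Suc n)"
    then have b: "b permutes {1..Suc n}" unfolding PS_def by blast
    show "(case (del n b, pos n b) of (p, i) \<Rightarrow> ins n p i) = b"
      using ins_del[OF b] by simp
    show "(del n b, pos n b) \<in> PS n \<times> {0..n}"
      using del_permutes[OF b] pos_range[OF b] unfolding PS_def by blast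
  qed
  finally show ?thesis by (rule sym)
qed


definition reach :: "(nat \<Rightarrow> nat) \<Rightarrow> nat \<Rightarrow> nat \<Rightarrow> bool" where
  "reach f a b = (\<exists>k. (f ^^ k) a = b)"

lemma reach_refl: "reach f a a"
  unfolding reach_def by (rule exI[of _ 0]) simp

lemma reach_step: "reach f a c \<Longrightarrow> reach f a (f c)"
proof -
  assume "reach f a c"
  then obtain k where "(f ^^ k) a = c" unfolding reach_def by blast
  then have "(f ^^ Suc k) a = f c" by simp
  then show ?thesis unfolding reach_def by blast
qed

lemma reach_trans: "reach f a b \<Longrightarrow> reach f b c \<Longrightarrow> reach f a c"
proof -
  assume "reach f a b" "reach f b c"
  then obtain k1 k2 where "(f ^^ k1) a = b" "(f ^^ k2) b = c" unfolding reach_def by blast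
  then have "(f ^^ (k2 + k1)) a = c" by (simp add: funpow_add)
  then show ?thesis unfolding reach_def by blast
qed

lemma cycle_of_reach: "cycle_of n p i = {j \<in> {1..n}. reach p i j}"
  by (simp add: cycle_of_def reach_def)

lemma reach_perm_in: "p permutes {1..n} \<Longrightarrow> a \<in> {1..n} \<Longrightarrow> reach p a b \<Longrightarrow> b \<in> {1..n}"
proof -
  assume p: "p permutes {1..n}" and a: "a \<in> {1..n}" and r: "reach p a b"
  from r obtain k where "(p ^^ k) a = b" unfolding reach_def by blast
  with permutes_in_funpow_image[OF p a, of k] show ?thesis by simp
qed

lemma funpow_fix: "f a = a \<Longrightarrow> (f ^^ k) a = a"
  by (induct k) auto

lemma reach_ins1:
  assumes p: "p permutes {1..n}" and i: "i \<in> {1..n}" and a: "a \<in> {1..n}"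
    and r: "reach p a b"
  shows "reach (ins n p i) a b"
proof -
  from r obtain k where "(p ^^ k) a = b" by (auto simp: reach_def)
  then show ?thesis
  proof (induction k arbitrary: b)
    case 0 then show ?case by (simp add: reach_refl)
  next
    case (Suc k)
    define c where "c = (p ^^ k) a"
    have c: "c \<in> {1..n}" unfolding c_def using permutes_in_funpow_image[OF p a] .
    have IH: "reach (ins n p i) a c" using Suc.IH c_def by simp
    have b: "b = p c" using Suc.prems c_def by simp
    show ?case
    proof (cases "c = i")
      case True
      have "reach (ins n p i) a (ins n p i (ins n p i c))" by (intro reach_step IH)
      moreover have "ins n p i (ins n p i c) = p c" using True i by (simp add: ins_def)
      ultimately show ?thesis using b by simp
    next
      case False
      have "ins n p i c = p c" using False c i by (simp add: ins_def)
      then show ?thesis using reach_step[OF IH] b by simp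
    qed
  qed
qed

lemma reach_ins2:
  assumes p: "p permutes {1..n}" and i: "i \<in> {1..n}" and a: "a \<in> {1..n}"
  shows "((ins n p i) ^^ k) a = b \<Longrightarrow> (b \<noteq> Suc n \<longrightarrow> reach p a b) \<and> (b = Suc n \<longrightarrow> reach p a i)"
proof (induction k arbitrary: b)
  case 0 then show ?case using a by (auto simp: reach_refl)
next
  case (Suc k)
  define c where "c = ((ins n p i) ^^ k) a"
  have IH: "(c \<noteq> Suc n \<longrightarrow> reach p a c) \<and> (c = Suc n \<longrightarrow> reach p a i)" using Suc.IH c_def by simp
  have b: "b = ins n p i c" using Suc.prems c_def by simp
  show ?case
  proof (cases "c = Suc n")
    case True
    then have bb: "b = p i" using b i by (simp add: ins_def)
    have "p i \<noteq> Suc n" using perm_in[OF p i] by auto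
    moreover have "reach p a i" using IH True by simp
    ultimately show ?thesis using reach_step[of p a i] bb by simp
  next
    case False
    show ?thesis
    proof (cases "c = i")
      case True then have "b = Suc n" using b i by (simp add: ins_def)
      then show ?thesis using IH True False by auto
    next
      case False2: False
      then have "b = p c" using b False i by (simp add: ins_def)
      moreover have "p c \<noteq> Suc n" using False perm_fix[OF p] permutes_inj[OF p] by (metis injD)
      moreover have "reach p a c" using IH False by simp
      ultimately show ?thesis using reach_step[of p a c] by simp
    qed
  qed
qed

lemma cyc_ins:
  assumes p: "p permutes {1..n}" and i: "i \<in> {1..n}"
  shows "cyc (Suc n) (ins n p i) = cyc n p"
proof -
  define s where "s = ins n p i"
  have si: "s i = Suc n" using i by (simp add: s_def ins_def)
  have sS: "s (Suc n) = p i" using i by (simp add: s_def ins_def)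
  have A: "cycle_of (Suc n) s j - {Suc n} = cycle_of n p j" if j: "j \<in> {1..n}" for j
  proof (rule set_eqI, rule iffI)
    fix b assume "b \<in> cycle_of (Suc n) s j - {Suc n}"
    then have b: "b \<noteq> Suc n" "reach s j b" by (auto simp: cycle_of_reach)
    then obtain k where "(s ^^ k) j = b" by (auto simp: reach_def)
    from reach_ins2[OF p i j this[unfolded s_def]] have "reach p j b" using b by auto
    then show "b \<in> cycle_of n p j" using reach_perm_in[OF p j] by (auto simp: cycle_of_reach)
  next
    fix b assume "b \<in> cycle_of n p j"
    then have "b \<in> {1..n}" "reach p j b" by (auto simp: cycle_of_reach)
    then show "b \<in> cycle_of (Suc n) s j - {Suc n}"
      using reach_ins1[OF p i j] by (auto simp: cycle_of_reach s_def)
  qed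
  have B: "Suc n \<in> cycle_of (Suc n) s j \<longleftrightarrow> i \<in> cycle_of (Suc n) s j" if j: "j \<in> {1..n}" for j
  proof
    assume "Suc n \<in> cycle_of (Suc n) s j"
    then have "reach s j (Suc n)" by (simp add: cycle_of_reach)
    then obtain k where "(s ^^ k) j = Suc n" by (auto simp: reach_def)
    from reach_ins2[OF p i j this[unfolded s_def]] have "reach p j i" by auto
    then have "reach s j i" using reach_ins1[OF p i j] s_def by simp
    then show "i \<in> cycle_of (Suc n) s j" using i by (simp add: cycle_of_reach)
  next
    assume "i \<in> cycle_of (Suc n) s j"
    then have "reach s j i" by (simp add: cycle_of_reach)
    then have "reach s j (s i)" by (rule reach_step)
    then show "Suc n \<in> cycle_of (Suc n) s j" using si by (simp add: cycle_of_reach)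
  qed
  have r1: "reach s i (Suc n)" using reach_step[OF reach_refl[of s i]] si by simp
  have r2: "reach s (Suc n) i"
  proof -
    have "permutation p" using permutes_imp_permutation[OF _ p] by simp
    then obtain m where m: "m > 0" "(p ^^ m) i = i" by (rule permutation_self)
    have "(p ^^ (m - 1)) (p i) = (p ^^ Suc (m - 1)) i" by (simp only: funpow_Suc_right comp_apply)
    also have "Suc (m - 1) = m" using m(1) by simp
    finally have "(p ^^ (m - 1)) (p i) = i" using m(2) by simp
    then have "reach p (p i) i" by (auto simp: reach_def)
    then have "reach s (p i) i" using reach_ins1[OF p i perm_in[OF p i]] s_def by simp
    moreover have "reach s (Suc n) (p i)" using reach_step[OF reach_refl[of s "Suc n"]] sS by simp
    ultimately show ?thesis by (rule reach_trans[rotated])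
  qed
  have C: "cycle_of (Suc n) s (Suc n) = cycle_of (Suc n) s i"
    unfolding cycle_of_reach using reach_trans[OF r2] reach_trans[OF r1] by auto
  have img: "cycle_of (Suc n) s ` {1..Suc n} = cycle_of (Suc n) s ` {1..n}"
  proof -
    have "{1..Suc n} = insert (Suc n) {1..n}" by auto
    then have "cycle_of (Suc n) s ` {1..Suc n} = insert (cycle_of (Suc n) s i) (cycle_of (Suc n) s ` {1..n})"
      using C by simp
    also have "\<dots> = cycle_of (Suc n) s ` {1..n}" using i by blast
    finally show ?thesis .
  qed
  have inj: "inj_on (\<lambda>C. C - {Suc n}) (cycle_of (Suc n) s ` {1..n})"
  proof (rule inj_onI)
    fix C1 C2 assume c1: "C1 \<in> cycle_of (Suc n) s ` {1..n}" and c2: "C2 \<in> cycle_of (Suc n) s ` {1..n}"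
      and eq: "C1 - {Suc n} = C2 - {Suc n}"
    from c1 obtain j1 where j1: "j1 \<in> {1..n}" "C1 = cycle_of (Suc n) s j1" by blast
    from c2 obtain j2 where j2: "j2 \<in> {1..n}" "C2 = cycle_of (Suc n) s j2" by blast
    have "i \<noteq> Suc n" using i by auto
    then have "i \<in> C1 \<longleftrightarrow> i \<in> C2" using eq by blast
    then have "Suc n \<in> C1 \<longleftrightarrow> Suc n \<in> C2" using B[OF j1(1)] B[OF j2(1)] j1(2) j2(2) by simp
    then show "C1 = C2" using eq by blast
  qed
  have img2: "(\<lambda>C. C - {Suc n}) ` (cycle_of (Suc n) s ` {1..n}) = cycle_of n p ` {1..n}"
    unfolding image_image using A by (intro image_cong) auto
  have "cyc (Suc n) s = card (cycle_of (Suc n) s ` {1..n})" unfolding cyc_def img ..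
  also have "\<dots> = card ((\<lambda>C. C - {Suc n}) ` (cycle_of (Suc n) s ` {1..n}))"
    using card_image[OF inj] by simp
  also have "\<dots> = cyc n p" unfolding img2 cyc_def ..
  finally show ?thesis unfolding s_def .
qed

lemma cyc_ins0:
  assumes p: "p permutes {1..n}"
  shows "cyc (Suc n) p = Suc (cyc n p)"
proof -
  have A: "cycle_of (Suc n) p j = cycle_of n p j" if j: "j \<in> {1..n}" for j
    unfolding cycle_of_reach using reach_perm_in[OF p j] by fastforce
  have C: "cycle_of (Suc n) p (Suc n) = {Suc n}"
    unfolding cycle_of_reach reach_def using funpow_fix[of p "Suc n"] perm_fix[OF p] by auto
  have "{1..Suc n} = insert (Suc n) {1..n}" by auto
  then have img: "cycle_of (Suc n) p ` {1..Suc n} = insert {Suc n} (cycle_of n p ` {1..n})"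
    using A C by simp
  have nin: "{Suc n} \<notin> cycle_of n p ` {1..n}"
  proof
    assume "{Suc n} \<in> cycle_of n p ` {1..n}"
    then obtain j where "{Suc n} = cycle_of n p j" by blast
    then have "Suc n \<in> cycle_of n p j" by (metis singletonI)
    then show False unfolding cycle_of_def by simp
  qed
  show ?thesis unfolding cyc_def img using nin by (simp add: card_insert_disjoint)
qed

lemma exc_ins0:
  assumes p: "p permutes {1..n}"
  shows "exc (Suc n) p = exc n p"
proof -
  have "{j \<in> {1..Suc n}. j < p j} = {j \<in> {1..n}. j < p j}"
    using perm_fix[OF p] by (auto simp: le_Suc_eq)
  then show ?thesis unfolding exc_def by simp
qed

lemma exc_le: "exc n p \<le> n"
proof -
  have "exc n p \<le> card {1..n}" unfolding exc_def by (rule card_mono) auto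
  then show ?thesis by simp
qed

lemma exc_ins:
  assumes p: "p permutes {1..n}" and i: "i \<in> {1..n}"
  shows "exc (Suc n) (ins n p i) = (if i < p i then exc n p else Suc (exc n p))"
proof -
  define S where "S = {j \<in> {1..n}. j < p j}"
  have pi: "p i \<in> {1..n}" using perm_in[OF p i] .
  have "{j \<in> {1..Suc n}. j < ins n p i j} = insert i (S - {i})"
  proof (rule set_eqI)
    fix x
    show "x \<in> {j \<in> {1..Suc n}. j < ins n p i j} \<longleftrightarrow> x \<in> insert i (S - {i})"
    proof (cases "x = i")
      case True then show ?thesis using i by (simp add: ins_def)
    next
      case False
      show ?thesis
      proof (cases "x = Suc n")
        case True then show ?thesis using i pi by (auto simp: ins_def S_def)
      next
        case False2: False
        then show ?thesis using False i by (auto simp: ins_def S_def le_Suc_eq)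
      qed
    qed
  qed
  then have e: "exc (Suc n) (ins n p i) = card (insert i (S - {i}))" unfolding exc_def by simp
  have fin: "finite S" unfolding S_def by simp
  have "card (insert i (S - {i})) = Suc (card (S - {i}))" using fin by (subst card_insert_disjoint) auto
  also have "\<dots> = (if i \<in> S then card S else Suc (card S))"
  proof (cases "i \<in> S")
    case True
    then have "card S > 0" using fin card_gt_0_iff by blast
    then show ?thesis using True by (simp add: card_Diff_singleton_if)
  qed (simp add: card_Diff_singleton_if)
  finally show ?thesis unfolding e using i by (simp add: S_def exc_def)
qed

lemma bivEuler_PS: "bivEuler n x y = (\<Sum>p\<in>PS n. x ^ exc n p * y ^ cyc n p)"
  by (simp add: bivEuler_def PS_def)

lemma sum_if_exc:
  assumes p: "p permutes {1..n}"
  shows "(\<Sum>i\<in>{1..n}. (if i < p i then x ^ exc n p else x ^ Suc (exc n p)) :: real)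
       = real (exc n p) * x ^ exc n p + real (n - exc n p) * x ^ Suc (exc n p)"
proof -
  have e1: "{1..n} \<inter> {i. i < p i} = {i \<in> {1..n}. i < p i}" by auto
  have e2: "{1..n} \<inter> - {i. i < p i} = {1..n} - {i \<in> {1..n}. i < p i}" by auto
  have c2: "card ({1..n} - {i \<in> {1..n}. i < p i}) = n - exc n p"
    unfolding exc_def by (subst card_Diff_subset) auto
  have "(\<Sum>i\<in>{1..n}. (if i < p i then x ^ exc n p else x ^ Suc (exc n p)) :: real)
     = (\<Sum>i\<in>{1..n} \<inter> {i. i < p i}. x ^ exc n p) + (\<Sum>i\<in>{1..n} \<inter> - {i. i < p i}. x ^ Suc (exc n p))"
    by (rule sum.If_cases) simp
  also have "\<dots> = real (exc n p) * x ^ exc n p + real (n - exc n p) * x ^ Suc (exc n p)"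
    unfolding e1 e2 sum_constant c2 exc_def[symmetric] by simp
  finally show ?thesis .
qed

lemma bivEuler_Suc:
  "bivEuler (Suc n) x y = (\<Sum>p\<in>PS n. x ^ exc n p * y ^ cyc n p *
      (y + real (exc n p) + real (n - exc n p) * x))"
proof -
  have "bivEuler (Suc n) x y = (\<Sum>p\<in>PS n. \<Sum>i\<in>{0..n}. x ^ exc (Suc n) (ins n p i) * y ^ cyc (Suc n) (ins n p i))"
    unfolding bivEuler_PS by (rule sum_PS_Suc)
  also have "\<dots> = (\<Sum>p\<in>PS n. x ^ exc n p * y ^ cyc n p *
      (y + real (exc n p) + real (n - exc n p) * x))"
  proof (rule sum.cong[OF refl])
    fix p assume "p \<in> PS n"
    then have p: "p permutes {1..n}" by (simp add: PS_def)
    have "{0..n} = insert 0 {1..n}" by auto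
    then have "(\<Sum>i\<in>{0..n}. x ^ exc (Suc n) (ins n p i) * y ^ cyc (Suc n) (ins n p i))
      = x ^ exc (Suc n) (ins n p 0) * y ^ cyc (Suc n) (ins n p 0)
        + (\<Sum>i\<in>{1..n}. x ^ exc (Suc n) (ins n p i) * y ^ cyc (Suc n) (ins n p i))"
      by simp
    also have "x ^ exc (Suc n) (ins n p 0) * y ^ cyc (Suc n) (ins n p 0) = x ^ exc n p * y ^ Suc (cyc n p)"
      using exc_ins0[OF p] cyc_ins0[OF p] by (simp add: ins_def)
    also have "(\<Sum>i\<in>{1..n}. x ^ exc (Suc n) (ins n p i) * y ^ cyc (Suc n) (ins n p i))
       = (\<Sum>i\<in>{1..n}. (if i < p i then x ^ exc n p else x ^ Suc (exc n p))) * y ^ cyc n p"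
      unfolding sum_distrib_right
      by (rule sum.cong[OF refl]) (simp add: exc_ins[OF p] cyc_ins[OF p])
    also have "\<dots> = (real (exc n p) * x ^ exc n p + real (n - exc n p) * x ^ Suc (exc n p)) * y ^ cyc n p"
      using sum_if_exc[OF p] by simp
    finally show "(\<Sum>i\<in>{0..n}. x ^ exc (Suc n) (ins n p i) * y ^ cyc (Suc n) (ins n p i))
       = x ^ exc n p * y ^ cyc n p * (y + real (exc n p) + real (n - exc n p) * x)"
      by (simp add: algebra_simps)
  qed
  finally show ?thesis .
qed


lemma DERIV_bivEuler:
  "((\<lambda>x. bivEuler n x y) has_real_derivative
     (\<Sum>p\<in>PS n. real (exc n p) * x ^ (exc n p - 1) * y ^ cyc n p)) (at x)"
  unfolding bivEuler_PS
  by (rule DERIV_sum) (auto intro!: derivative_eq_intros)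

lemma bivEuler_Suc_deriv:
  "bivEuler (Suc n) x y = (y + real n * x) * bivEuler n x y
     + x * (1 - x) * (\<Sum>p\<in>PS n. real (exc n p) * x ^ (exc n p - 1) * y ^ cyc n p)"
proof -
  have t: "x ^ exc n p * y ^ cyc n p * (y + real (exc n p) + real (n - exc n p) * x)
        = (y + real n * x) * (x ^ exc n p * y ^ cyc n p)
          + x * (1 - x) * (real (exc n p) * x ^ (exc n p - 1) * y ^ cyc n p)" for p
  proof -
    have e: "exc n p \<le> n" by (rule exc_le)
    define E where "E = real (exc n p)"
    define P where "P = x ^ exc n p"
    define D where "D = real (exc n p) * x ^ (exc n p - 1)"
    define Y where "Y = y ^ cyc n p"
    have xe: "x * D = E * P" unfolding D_def E_def P_def by (cases "exc n p") auto
    have ne: "real (n - exc n p) = real n - E" unfolding E_def using e by (simp add: of_nat_diff)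
    have "x * (1 - x) * (D * Y) = (1 - x) * (x * D) * Y" by (simp add: algebra_simps)
    also have "\<dots> = (1 - x) * (E * P) * Y" by (simp only: xe)
    finally have "P * Y * (y + E + (real n - E) * x) = (y + real n * x) * (P * Y) + x * (1 - x) * (D * Y)"
      by (simp add: algebra_simps)
    then show ?thesis unfolding E_def P_def D_def Y_def by (simp add: mult.assoc ne[unfolded E_def])
  qed
  have "bivEuler (Suc n) x y = (\<Sum>p\<in>PS n. (y + real n * x) * (x ^ exc n p * y ^ cyc n p)
          + x * (1 - x) * (real (exc n p) * x ^ (exc n p - 1) * y ^ cyc n p))"
    unfolding bivEuler_Suc using t by (simp only:)
  also have "\<dots> = (y + real n * x) * bivEuler n x y
     + x * (1 - x) * (\<Sum>p\<in>PS n. real (exc n p) * x ^ (exc n p - 1) * y ^ cyc n p)"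
    unfolding sum.distrib sum_distrib_left[symmetric] bivEuler_PS ..
  finally show ?thesis .
qed

fun Hp :: "nat \<Rightarrow> 'a::field_char_0 poly" where
  "Hp 0 = 1"
| "Hp (Suc n) = pCons 0 (pderiv (Hp n) + pCons 0 (pderiv (Hp n))) + smult (1/2) (Hp n + pCons 0 (Hp n))"

lemma poly_Hp_Suc:
  "poly (Hp (Suc n)) z = z * (1 + z) * poly (pderiv (Hp n)) z + (1 + z) / 2 * poly (Hp n) z"
  by (simp add: algebra_simps)

lemma DERIV_Q:
  fixes x :: real assumes x: "x < 1"
  shows "((\<lambda>x. (1-x)^n * poly (Hp n) (x/(1-x))) has_real_derivative
     (- (real n * (1-x)^(n-1)) * poly (Hp n) (x/(1-x))
       + (1-x)^n * (poly (pderiv (Hp n)) (x/(1-x)) * (1/(1-x)^2)))) (at x)"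
proof -
  have d1: "((\<lambda>x. x/(1-x)) has_real_derivative 1/(1-x)^2) (at x)"
    using x by (auto intro!: derivative_eq_intros simp: field_simps power2_eq_square)
  have d2: "((\<lambda>x. poly (Hp n) (x/(1-x))) has_real_derivative
      poly (pderiv (Hp n)) (x/(1-x)) * (1/(1-x)^2)) (at x)"
    by (rule DERIV_chain2[OF poly_DERIV d1])
  have d3: "((\<lambda>x. (1-x)^n) has_real_derivative - (real n * (1-x)^(n-1))) (at x)"
    by (auto intro!: derivative_eq_intros)
  from DERIV_mult[OF d3 d2] show ?thesis by (simp add: mult.commute)
qed

lemma nw: fixes x :: real assumes "x \<noteq> 1"
  shows "real n * (1-x)^(n-1) = real n * (1-x)^n / (1-x)"
  using assms by (cases n) (auto simp: field_simps)

lemma bivEuler_Hp: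
  fixes x :: real assumes "x < 1"
  shows "bivEuler n x (1/2) = (1-x)^n * poly (Hp n) (x/(1-x))"
  using assms
proof (induction n arbitrary: x)
  case 0 then show ?case by (simp add: bivEuler_def exc_def cyc_def permutes_empty)
next
  case (Suc n)
  define D where "D = (\<Sum>p\<in>PS n. real (exc n p) * x ^ (exc n p - 1) * (1/2) ^ cyc n p)"
  have eqQ: "bivEuler n z (1/2) = (1-z)^n * poly (Hp n) (z/(1-z))" if "z \<in> {..<1}" for z
    using Suc.IH that by simp
  have dF: "((\<lambda>z. bivEuler n z (1/2)) has_real_derivative D) (at x)"
    unfolding D_def by (rule DERIV_bivEuler)
  have dQ1: "((\<lambda>z. (1-z)^n * poly (Hp n) (z/(1-z))) has_real_derivative D) (at x)"
    by (rule has_field_derivative_transform_within_open[OF dF, of "{..<1}"]) (use Suc.prems eqQ in auto)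
  have D: "D = - (real n * (1-x)^(n-1)) * poly (Hp n) (x/(1-x))
       + (1-x)^n * (poly (pderiv (Hp n)) (x/(1-x)) * (1/(1-x)^2))"
    using DERIV_unique[OF dQ1 DERIV_Q[OF Suc.prems]] .
  have x1: "x \<noteq> 1" "1 - x \<noteq> 0" using Suc.prems by auto
  have "bivEuler (Suc n) x (1/2) = (1/2 + real n * x) * bivEuler n x (1/2) + x * (1-x) * D"
    unfolding D_def by (rule bivEuler_Suc_deriv)
  also have "\<dots> = (1-x)^(Suc n) * poly (Hp (Suc n)) (x/(1-x))"
    unfolding poly_Hp_Suc D nw[OF x1(1)] eqQ[of x, OF \<open>x < 1\<close>[THEN lessThan_iff[THEN iffD2]]]
    using x1 by (simp add: field_simps power2_eq_square)
  finally show ?case .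
qed


lemma coeff_Hp: "coeff (Hp n :: complex poly) k = of_real (coeff (Hp n :: real poly) k)"
  by (induction n arbitrary: k) (auto simp: coeff_pderiv coeff_pCons split: nat.split)

lemma Hp_map: "(Hp n :: complex poly) = map_poly of_real (Hp n)"
  by (rule poly_eqI) (simp add: coeff_map_poly coeff_Hp)

lemma poly_map_of_real: "poly (map_poly of_real p) (of_real r :: complex) = of_real (poly p r)"
  by (induction p rule: pCons_induct) (auto simp: map_poly_pCons)

lemma poly_Hp_of_real: "poly (Hp n :: complex poly) (of_real r) = of_real (poly (Hp n :: real poly) r)"
  by (simp only: Hp_map poly_map_of_real)

definition EE :: "real \<Rightarrow> complex \<Rightarrow> complex" where
  "EE x u = exp (- of_real (1 - x) * u) - of_real x"
definition sC :: "real \<Rightarrow> complex \<Rightarrow> complex" where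
  "sC x u = of_real x / EE x u"
definition hC :: "real \<Rightarrow> complex \<Rightarrow> complex" where
  "hC x u = of_real (1 - x) / EE x u"
definition AC :: "real \<Rightarrow> complex \<Rightarrow> complex" where
  "AC x u = csqrt (hC x u)"
definition BC :: "real \<Rightarrow> nat \<Rightarrow> complex \<Rightarrow> complex" where
  "BC x n u = of_real (1 - x) ^ n * poly (Hp n) (sC x u) * AC x u"
definition UU :: "real \<Rightarrow> complex set" where
  "UU x = {u. 0 < Re (EE x u)}"

lemma open_UU: "open (UU x)"
  unfolding UU_def EE_def by (rule open_Collect_less) (auto intro!: continuous_intros)

lemma zero_UU: "x < 1 \<Longrightarrow> 0 \<in> UU x"
  by (simp add: UU_def EE_def)

lemma EE_nz: "u \<in> UU x \<Longrightarrow> EE x u \<noteq> 0"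
  by (auto simp: UU_def)

lemma DERIV_EE: "(EE x has_field_derivative (- of_real (1 - x) * (EE x u + of_real x))) (at u)"
  unfolding EE_def by (auto intro!: derivative_eq_intros)

lemma DERIV_sC:
  assumes u: "u \<in> UU x"
  shows "(sC x has_field_derivative (of_real (1 - x) * sC x u * (1 + sC x u))) (at u)"
proof -
  have nz: "EE x u \<noteq> 0" using EE_nz[OF u] .
  have "((\<lambda>u. of_real x / EE x u) has_field_derivative
      - (of_real x * (- of_real (1 - x) * (EE x u + of_real x))) / (EE x u)^2) (at u)"
    using DERIV_EE[of x u] nz by (auto intro!: derivative_eq_intros simp: power2_eq_square)
  moreover have "- (of_real x * (- of_real (1 - x) * (EE x u + of_real x))) / (EE x u)^2
      = of_real (1 - x) * sC x u * (1 + sC x u)"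
    using nz by (simp add: sC_def field_simps power2_eq_square)
  ultimately show ?thesis unfolding sC_def[abs_def] by simp
qed

lemma hC_notin:
  assumes x: "x < 1" and u: "u \<in> UU x"
  shows "hC x u \<notin> \<real>\<^sub>\<le>\<^sub>0"
proof -
  have p: "0 < Re (EE x u)" using u by (simp add: UU_def)
  have d: "0 < Re (EE x u) * Re (EE x u) + Im (EE x u) * Im (EE x u)"
    using p by (intro add_pos_nonneg) auto
  have "0 < (1 - x) * Re (EE x u) / (Re (EE x u) * Re (EE x u) + Im (EE x u) * Im (EE x u))"
    using p d x by (intro divide_pos_pos mult_pos_pos) auto
  then have "0 < Re (hC x u)"
    by (simp add: hC_def Re_divide power2_eq_square)
  then show ?thesis by (simp add: complex_nonpos_Reals_iff)
qed

lemma DERIV_AC: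
  assumes x: "x < 1" and u: "u \<in> UU x"
  shows "(AC x has_field_derivative (of_real (1 - x) / 2 * (1 + sC x u) * AC x u)) (at u)"
proof -
  have nz: "EE x u \<noteq> 0" using EE_nz[OF u] .
  have hnz: "hC x u \<noteq> 0" using nz x by (simp add: hC_def)
  have dh: "(hC x has_field_derivative (of_real (1 - x) * hC x u * (1 + sC x u))) (at u)"
  proof -
    have "((\<lambda>u. of_real (1 - x) / EE x u) has_field_derivative
        - (of_real (1 - x) * (- of_real (1 - x) * (EE x u + of_real x))) / (EE x u)^2) (at u)"
      using DERIV_EE[of x u] nz by (auto intro!: derivative_eq_intros simp: power2_eq_square)
    moreover have "- (of_real (1 - x) * (- of_real (1 - x) * (EE x u + of_real x))) / (EE x u)^2
        = of_real (1 - x) * hC x u * (1 + sC x u)"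
      using nz by (simp add: sC_def hC_def field_simps power2_eq_square)
    ultimately show ?thesis unfolding hC_def[abs_def] by simp
  qed
  have dd: "((\<lambda>u. csqrt (hC x u)) has_field_derivative
      (of_real (1 - x) * hC x u * (1 + sC x u)) / (2 * csqrt (hC x u))) (at u)"
    by (rule has_field_derivative_csqrt'[OF dh hC_notin[OF x u]])
  have eq: "(of_real (1 - x) * hC x u * (1 + sC x u)) / (2 * csqrt (hC x u))
      = of_real (1 - x) / 2 * (1 + sC x u) * AC x u"
  proof -
    have sq: "csqrt (hC x u) * csqrt (hC x u) = hC x u" using power2_csqrt[of "hC x u"]
      by (simp add: power2_eq_square)
    have "csqrt (hC x u) \<noteq> 0" using hnz by simp
    then show ?thesis unfolding AC_def using sq
      by (simp add: field_simps)
  qed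
  show ?thesis using dd unfolding eq unfolding AC_def[abs_def] .
qed

lemma DERIV_BC:
  assumes x: "x < 1" and u: "u \<in> UU x"
  shows "(BC x n has_field_derivative BC x (Suc n) u) (at u)"
proof -
  have d: "(BC x n has_field_derivative
     of_real (1 - x) ^ n * (poly (pderiv (Hp n)) (sC x u) * (of_real (1 - x) * sC x u * (1 + sC x u)) * AC x u
       + poly (Hp n) (sC x u) * (of_real (1 - x) / 2 * (1 + sC x u) * AC x u))) (at u)"
    unfolding BC_def[abs_def]
    using DERIV_sC[OF u] DERIV_AC[OF x u]
    by (auto intro!: derivative_eq_intros DERIV_chain2[OF poly_DERIV] simp: algebra_simps)
  moreover have "of_real (1 - x) ^ n * (poly (pderiv (Hp n)) (sC x u) * (of_real (1 - x) * sC x u * (1 + sC x u)) * AC x u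
       + poly (Hp n) (sC x u) * (of_real (1 - x) / 2 * (1 + sC x u) * AC x u)) = BC x (Suc n) u"
    unfolding BC_def poly_Hp_Suc by (simp add: algebra_simps)
  ultimately show ?thesis by simp
qed

lemma deriv_AC:
  assumes x: "x < 1" and u: "u \<in> UU x"
  shows "(deriv ^^ n) (AC x) u = BC x n u"
  using u
proof (induction n arbitrary: u)
  case 0 then show ?case by (simp add: BC_def)
next
  case (Suc n)
  have ev: "eventually (\<lambda>v. (deriv ^^ n) (AC x) v = BC x n v) (nhds u)"
    using Suc.IH eventually_nhds_in_open[OF open_UU Suc.prems] by (auto elim!: eventually_mono)
  have "(deriv ^^ Suc n) (AC x) u = deriv ((deriv ^^ n) (AC x)) u" by simp
  also have "\<dots> = deriv (BC x n) u" by (rule deriv_cong_ev[OF ev refl])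
  also have "\<dots> = BC x (Suc n) u" by (rule DERIV_imp_deriv[OF DERIV_BC[OF x Suc.prems]])
  finally show ?case .
qed

lemma BC_0:
  assumes x0: "0 < x" and x: "x < 1"
  shows "BC x n 0 = of_real (bivEuler n x (1/2))"
proof -
  have e: "EE x 0 = of_real (1 - x)" by (simp add: EE_def)
  have s: "sC x 0 = of_real (x / (1 - x))" using x by (simp add: sC_def e)
  have a: "AC x 0 = 1" using x by (simp add: AC_def hC_def e)
  show ?thesis unfolding BC_def s a poly_Hp_of_real bivEuler_Hp[OF x] by simp
qed


lemma series_g:
  assumes x0: "0 < x" and x1: "x < 1"
  obtains \<rho> where "\<rho> > 0" "\<And>t::real. \<bar>t\<bar> < \<rho> \<Longrightarrow> 0 < exp (-(1-x)*(2*t)) - x \<and>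
      (\<lambda>n. bivEuler n x (1/2) / fact n * (2*t)^n) sums sqrt ((1-x)/(exp (-(1-x)*(2*t)) - x))"
proof -
  obtain r where r: "r > 0" "ball 0 r \<subseteq> UU x"
    using open_UU[of x] zero_UU[OF x1] open_contains_ball by blast
  have hol: "AC x holomorphic_on ball 0 r"
    unfolding holomorphic_on_open[OF open_ball] using DERIV_AC[OF x1] r(2) by blast
  show ?thesis
  proof (rule that[of "r/2"])
    show "r/2 > 0" using r by simp
    fix t :: real assume t: "\<bar>t\<bar> < r/2"
    define z where "z = complex_of_real (2*t)"
    have zb: "z \<in> ball 0 r" using t by (simp add: z_def)
    have zU: "z \<in> UU x" using zb r by blast
    have EEz: "EE x z = of_real (exp (-(1-x)*(2*t)) - x)"
      by (simp add: EE_def z_def flip: exp_of_real)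
    have pos: "0 < exp (-(1-x)*(2*t)) - x" using zU EEz by (simp add: UU_def)
    have ACz: "AC x z = of_real (sqrt ((1-x)/(exp (-(1-x)*(2*t)) - x)))"
    proof -
      have "hC x z = of_real ((1-x)/(exp (-(1-x)*(2*t)) - x))" by (simp add: hC_def EEz)
      moreover have "0 \<le> (1-x)/(exp (-(1-x)*(2*t)) - x)" using pos x1 by simp
      ultimately show ?thesis by (simp add: AC_def)
    qed
    have ser: "(\<lambda>n. (deriv ^^ n) (AC x) 0 / fact n * (z - 0)^n) sums AC x z"
      by (rule holomorphic_power_series[OF hol zb])
    have dn: "(deriv ^^ n) (AC x) 0 = of_real (bivEuler n x (1/2))" for n
      using deriv_AC[OF x1 zero_UU[OF x1]] BC_0[OF x0 x1] by simp
    have fe: "(\<lambda>n. (deriv ^^ n) (AC x) 0 / fact n * (z - 0)^n)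
        = (\<lambda>n. complex_of_real (bivEuler n x (1/2) / fact n * (2*t)^n))"
      by (simp add: dn z_def)
    have "(\<lambda>n. complex_of_real (bivEuler n x (1/2) / fact n * (2*t)^n))
        sums complex_of_real (sqrt ((1-x)/(exp (-(1-x)*(2*t)) - x)))"
      using ser unfolding fe ACz .
    then show "0 < exp (-(1-x)*(2*t)) - x \<and>
      (\<lambda>n. bivEuler n x (1/2) / fact n * (2*t)^n) sums sqrt ((1-x)/(exp (-(1-x)*(2*t)) - x))"
      using pos by (simp only: sums_of_real_iff simp_thms)
  qed
qed


lemma G_deriv:
  fixes x t :: real
  assumes x0: "0 < x" and x1: "x < 1" and pos: "0 < exp (-(1-x)*(2*t)) - x"
  shows "((\<lambda>t. (arcsin (sqrt x * exp ((1 - x) * t)) - arcsin (sqrt x)) / (sqrt x * sqrt (1 - x)))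
     has_real_derivative sqrt ((1-x)/(exp (-(1-x)*(2*t)) - x))) (at t)"
proof -
  define a where "a = exp ((1-x)*t)"
  have a0: "a > 0" unfolding a_def by simp
  have e2: "exp (-(1-x)*(2*t)) * a^2 = 1"
    unfolding a_def by (simp add: power2_eq_square mult_exp_exp algebra_simps)
  define q where "q = 1 - x * a^2"
  have q0: "q > 0"
  proof -
    have "0 < (exp (-(1-x)*(2*t)) - x) * a^2" using pos a0 by simp
    also have "\<dots> = q" using e2 unfolding q_def by (simp add: algebra_simps)
    finally show ?thesis .
  qed
  have sq: "(sqrt x * a)^2 = x * a^2" using x0 by (simp add: power_mult_distrib)
  have lt1: "sqrt x * a < 1"
  proof -
    have "(sqrt x * a)^2 < 1^2" using sq q0 unfolding q_def by simp
    then show ?thesis using power_less_imp_less_base[of "sqrt x * a" 2 1] by simp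
  qed
  have gt: "-1 < sqrt x * a" using x0 a0 by (smt (verit) mult_pos_pos real_sqrt_gt_zero)
  have d1: "((\<lambda>t. sqrt x * exp ((1-x)*t)) has_real_derivative sqrt x * (a * (1-x))) (at t)"
    unfolding a_def by (auto intro!: derivative_eq_intros)
  have d2: "((\<lambda>t. arcsin (sqrt x * exp ((1-x)*t))) has_real_derivative
       inverse (sqrt (1 - (sqrt x * a)^2)) * (sqrt x * (a * (1-x)))) (at t)"
    using DERIV_chain2[OF DERIV_arcsin d1] gt lt1 unfolding a_def by simp
  have d3: "((\<lambda>t. (arcsin (sqrt x * exp ((1 - x) * t)) - arcsin (sqrt x)) / (sqrt x * sqrt (1 - x)))
     has_real_derivative (inverse (sqrt (1 - (sqrt x * a)^2)) * (sqrt x * (a * (1-x))) - 0) / (sqrt x * sqrt (1 - x))) (at t)"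
    by (intro DERIV_cdivide DERIV_diff d2 DERIV_const)
  have v1: "(inverse (sqrt (1 - (sqrt x * a)^2)) * (sqrt x * (a * (1-x))) - 0) / (sqrt x * sqrt (1 - x))
      = a * sqrt (1-x) / sqrt q"
  proof -
    have s1: "sqrt (1-x) * sqrt (1-x) = 1 - x" using x1 by simp
    have sx: "sqrt x > 0" "sqrt (1-x) > 0" "sqrt q > 0" using x0 x1 q0 by auto
    have r: "1 - (sqrt x * a)^2 = q" using sq unfolding q_def by simp
    have "(inverse (sqrt (1 - (sqrt x * a)^2)) * (sqrt x * (a * (1-x))) - 0) / (sqrt x * sqrt (1 - x))
        = a * ((1-x) / sqrt (1-x)) / sqrt q"
      unfolding r using sx by (simp add: field_simps)
    also have "\<dots> = a * sqrt (1-x) / sqrt q" using x1 by (simp add: real_div_sqrt)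
    finally show ?thesis .
  qed
  have v2: "sqrt ((1-x)/(exp (-(1-x)*(2*t)) - x)) = a * sqrt (1-x) / sqrt q"
  proof (rule real_sqrt_unique)
    show "0 \<le> a * sqrt (1-x) / sqrt q" using a0 x1 q0 by simp
    have ex: "exp (-(1-x)*(2*t)) = 1 / a^2" using e2 a0 by (simp add: field_simps)
    show "(a * sqrt (1-x) / sqrt q)^2 = (1-x)/(exp (-(1-x)*(2*t)) - x)"
      using a0 x1 q0 unfolding ex q_def by (simp add: power_divide power_mult_distrib field_simps)
  qed
  show ?thesis using d3 unfolding v1 v2[symmetric] .
qed

theorem mainTheorem11:
  fixes x :: real
  assumes "0 < x" and "x < 1"
  shows "\<exists>r>0. \<forall>t::real. \<bar>t\<bar> < r \<longrightarrow>
    (\<lambda>n. 2 ^ n * bivEuler n x (1/2) * t ^ (Suc n) / fact (Suc n)) sums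
      ((arcsin (sqrt x * exp ((1 - x) * t)) - arcsin (sqrt x)) / (sqrt x * sqrt (1 - x)))"
proof -
  obtain \<rho> where \<rho>: "\<rho> > 0" and S: "\<And>t::real. \<bar>t\<bar> < \<rho> \<Longrightarrow> 0 < exp (-(1-x)*(2*t)) - x \<and>
      (\<lambda>n. bivEuler n x (1/2) / fact n * (2*t)^n) sums sqrt ((1-x)/(exp (-(1-x)*(2*t)) - x))"
    using series_g[OF assms] by blast
  define F where "F n = bivEuler n x (1/2)" for n
  define c where "c n = (if n = 0 then 0 else 2^(n-1) * F (n-1) / fact n)" for n
  define g where "g t = sqrt ((1-x)/(exp (-(1-x)*(2*t)) - x))" for t
  define G where "G t = (arcsin (sqrt x * exp ((1 - x) * t)) - arcsin (sqrt x)) / (sqrt x * sqrt (1 - x))" for t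
  define Ss where "Ss t = (\<Sum>n. c n * t^n)" for t :: real
  have Fnn: "F n \<ge> 0" for n unfolding F_def bivEuler_def using assms by (intro sum_nonneg) auto
  have ceq: "c (Suc n) * t^(Suc n) = t * (F n / fact n * (2*t)^n) / real (Suc n)" for n t
    by (simp add: c_def power_mult_distrib field_simps)
  have summ: "summable (\<lambda>n. c n * t^n)" if t: "\<bar>t\<bar> < \<rho>" for t
  proof -
    have "summable (\<lambda>n. F n / fact n * (2*\<bar>t\<bar>)^n)" using S[of "\<bar>t\<bar>"] t
      by (auto simp: F_def sums_summable)
    then have s1: "summable (\<lambda>n. \<bar>t\<bar> * (F n / fact n * (2*\<bar>t\<bar>)^n))" by (rule summable_mult)
    have "summable (\<lambda>n. c (Suc n) * t^(Suc n))"
    proof (rule summable_comparison_test'[OF s1])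
      fix n :: nat
      have "norm (c (Suc n) * t^(Suc n)) = \<bar>t\<bar> * (F n / fact n * (2*\<bar>t\<bar>)^n) / real (Suc n)"
        unfolding ceq using Fnn[of n] by (simp add: abs_mult power_abs)
      also have "\<dots> \<le> \<bar>t\<bar> * (F n / fact n * (2*\<bar>t\<bar>)^n)"
      proof -
        have A0: "0 \<le> \<bar>t\<bar> * (F n / fact n * (2*\<bar>t\<bar>)^n)" using Fnn[of n] by simp
        have "\<bar>t\<bar> * (F n / fact n * (2*\<bar>t\<bar>)^n) / real (Suc n) \<le> \<bar>t\<bar> * (F n / fact n * (2*\<bar>t\<bar>)^n) / 1"
          by (rule divide_left_mono[OF _ A0]) auto
        then show ?thesis by simp
      qed
      finally show "norm (c (Suc n) * t^(Suc n)) \<le> \<bar>t\<bar> * (F n / fact n * (2*\<bar>t\<bar>)^n)" .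
    qed
    then show ?thesis using summable_Suc_iff by blast
  qed
  have Ss_sums: "(\<lambda>n. c n * t^n) sums Ss t" if "\<bar>t\<bar> < \<rho>" for t
    using summable_sums[OF summ[OF that]] unfolding Ss_def .
  have dS: "(Ss has_real_derivative g t) (at t)" if t: "\<bar>t\<bar> < \<rho>" for t
  proof -
    have "(Ss has_real_derivative (\<Sum>n. diffs c n * t^n)) (at t)"
      unfolding Ss_def[abs_def] by (rule termdiffs_strong'[of \<rho>]) (use summ t in auto)
    moreover have "(\<Sum>n. diffs c n * t^n) = g t"
    proof -
      have "diffs c n * t^n = F n / fact n * (2*t)^n" for n
      proof -
        have "diffs c n * t^n = real (Suc n) * (2^n * F n / (real (Suc n) * fact n)) * t^n"
          by (simp add: diffs_def c_def del: of_nat_Suc)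
        also have "\<dots> = F n / fact n * (2*t)^n"
          by (simp add: power_mult_distrib field_simps del: of_nat_Suc)
        finally show ?thesis .
      qed
      then have d: "(\<lambda>n. diffs c n * t^n) = (\<lambda>n. F n / fact n * (2*t)^n)" by (rule ext)
      show ?thesis unfolding d F_def g_def by (rule sym, rule sums_unique, rule conjunct2[OF S[OF t]])
    qed
    ultimately show ?thesis by simp
  qed
  have dG: "(G has_real_derivative g t) (at t)" if t: "\<bar>t\<bar> < \<rho>" for t
    unfolding G_def[abs_def] g_def using G_deriv[OF assms] S[OF t] by blast
  have dh: "((\<lambda>t. Ss t - G t) has_real_derivative 0) (at t)" if t: "\<bar>t\<bar> < \<rho>" for t
    using DERIV_diff[OF dS[OF t] dG[OF t]] by simp
  have h0: "Ss 0 - G 0 = 0" by (simp add: Ss_def G_def c_def)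
  have cont: "continuous_on {a..b} (\<lambda>t. Ss t - G t)" if "\<bar>a\<bar> < \<rho>" "\<bar>b\<bar> < \<rho>" for a b
  proof (rule continuous_at_imp_continuous_on, rule ballI)
    fix s assume "s \<in> {a..b}"
    then have "\<bar>s\<bar> < \<rho>" using that by auto
    then show "isCont (\<lambda>t. Ss t - G t) s" using DERIV_isCont[OF dh] by blast
  qed
  have SG: "Ss t = G t" if t: "\<bar>t\<bar> < \<rho>" for t
  proof -
    consider "t = 0" | "0 < t" | "t < 0" by linarith
    then show ?thesis
    proof cases
      case 1 then show ?thesis using h0 by simp
    next
      case 2
      have "Ss t - G t = Ss 0 - G 0"
        by (rule DERIV_isconst_end[OF 2 cont]) (use t \<rho> dh in auto)
      then show ?thesis using h0 by simp
    next
      case 3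
      have "Ss 0 - G 0 = Ss t - G t"
        by (rule DERIV_isconst_end[OF 3 cont]) (use t \<rho> dh in auto)
      then show ?thesis using h0 by simp
    qed
  qed
  show ?thesis
  proof (intro exI[of _ \<rho>] conjI allI impI)
    show "\<rho> > 0" by (rule \<rho>)
    fix t :: real assume t: "\<bar>t\<bar> < \<rho>"
    have fe: "(\<lambda>n. 2 ^ n * bivEuler n x (1/2) * t ^ (Suc n) / fact (Suc n)) = (\<lambda>n. c (Suc n) * t ^ Suc n)"
      by (simp add: c_def F_def)
    have "(\<lambda>n. c n * t^n) sums (G t + c 0 * t^0)" using Ss_sums[OF t] SG[OF t] by (simp add: c_def)
    then have "(\<lambda>n. c (Suc n) * t ^ Suc n) sums G t"
      by (rule sums_Suc_iff[of "\<lambda>n. c n * t^n" "G t", THEN iffD2])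
    then show "(\<lambda>n. 2 ^ n * bivEuler n x (1/2) * t ^ (Suc n) / fact (Suc n)) sums
      ((arcsin (sqrt x * exp ((1 - x) * t)) - arcsin (sqrt x)) / (sqrt x * sqrt (1 - x)))"
      unfolding fe G_def .
  qed
qed

end
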